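(* Let $q\in[0,1)$ and let $R$ be a matrix-valued rational function analytic at the origin. Suppose $R(z)=C(I_N-zA)^{-1}B=C'(I_{N'}-zA')^{-1}B'$ near the origin for two (not necessarily minimal) realizations. Then, near the origin, \[ C\prod_{j=0}^\infty\bigl(I_N-z(1-q)q^jA\bigr)^{-1}B=C'\prod_{j=0}^\infty\bigl(I_{N'}-z(1-q)q^jA'\bigr)^{-1}B' , \] i.e. the function $T(R)(z,q)=C\prod_{j=0}^\infty(I_N-z(1-q)q^jA)^{-1}B$ does not depend on the chosen realization.
   Context: Convention $q^0=1$. Matrices have compatible sizes: $C\in\mathbb C^{n\times N}$, $A\in\mathbb C^{N\times N}$, $B\in\mathbb C^{N\times m}$, similarly for the primed triple. *)

theory Defs
  imports "HOL-Analysis.Analysis"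
begin

definition cmat_scale :: "complex \<Rightarrow> complex^'c^'r \<Rightarrow> complex^'c^'r" where
  "cmat_scale z A = (\<chi> i j. z * A $ i $ j)"

definition resolv :: "complex \<Rightarrow> complex^'N^'N \<Rightarrow> complex^'N^'N" where
  "resolv w A = matrix_inv (mat 1 - cmat_scale w A)"

fun qpartial :: "real \<Rightarrow> complex^'N^'N \<Rightarrow> complex \<Rightarrow> nat \<Rightarrow> complex^'N^'N" where
  "qpartial q A z 0 = mat 1"
| "qpartial q A z (Suc M) =
     qpartial q A z M ** resolv (z * complex_of_real ((1 - q) * q ^ M)) A"

definition qinfprod :: "real \<Rightarrow> complex^'N^'N \<Rightarrow> complex \<Rightarrow> complex^'N^'N" where
  "qinfprod q A z = lim (qpartial q A z)"

end

theory Submission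
  imports Defs
begin


lemma cs_mult_left: "cmat_scale a X ** Y = cmat_scale a (X ** Y)"
  by (simp add: vec_eq_iff matrix_matrix_mult_def cmat_scale_def sum_distrib_left algebra_simps)
lemma cs_mult_right: "X ** cmat_scale a Y = cmat_scale a (X ** Y)"
  by (simp add: vec_eq_iff matrix_matrix_mult_def cmat_scale_def sum_distrib_left algebra_simps)
lemma mm_diff_left: "(X - Y) ** (Z::'a::ring_1^_^_) = X ** Z - Y ** Z"
  by (simp add: vec_eq_iff matrix_matrix_mult_def algebra_simps sum_subtractf)
lemma mm_diff_right: "(X::'a::ring_1^_^_) ** (Y - Z) = X ** Y - X ** Z"
  by (simp add: vec_eq_iff matrix_matrix_mult_def algebra_simps sum_subtractf)
lemma mm_add_left: "(X + Y) ** (Z::'a::ring_1^_^_) = X ** Z + Y ** Z"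
  by (simp add: vec_eq_iff matrix_matrix_mult_def algebra_simps sum.distrib)
lemma mm_zero_left: "(0::'a::ring_1^_^_) ** Z = 0"
  by (simp add: vec_eq_iff matrix_matrix_mult_def)
lemma mm_zero_right: "(Z::'a::ring_1^_^_) ** 0 = 0"
  by (simp add: vec_eq_iff matrix_matrix_mult_def)
lemma mm_sum_left: "finite S \<Longrightarrow> (\<Sum>s\<in>S. f s) ** (Z::'a::ring_1^_^_) = (\<Sum>s\<in>S. f s ** Z)"
  by (induction S rule: finite_induct) (simp_all add: mm_zero_left mm_add_left)
lemma mm_sum_right: "finite S \<Longrightarrow> (Z::'a::ring_1^_^_) ** (\<Sum>s\<in>S. f s) = (\<Sum>s\<in>S. Z ** f s)"
  by (induction S rule: finite_induct) (simp_all add: mm_zero_right matrix_add_ldistrib)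
lemma cs_sum_coeff: "finite S \<Longrightarrow> cmat_scale (\<Sum>s\<in>S. c s) X = (\<Sum>s\<in>S. cmat_scale (c s) X)"
  by (induction S rule: finite_induct) (simp_all add: vec_eq_iff cmat_scale_def algebra_simps)
lemma cs_sum: "finite S \<Longrightarrow> cmat_scale a (\<Sum>s\<in>S. f s) = (\<Sum>s\<in>S. cmat_scale a (f s))"
  by (induction S rule: finite_induct) (simp_all add: vec_eq_iff cmat_scale_def algebra_simps)
lemma cs_cs: "cmat_scale a (cmat_scale b X) = cmat_scale (a*b) X"
  by (simp add: vec_eq_iff cmat_scale_def)
lemma cs_diff: "cmat_scale a (X - Y) = cmat_scale a X - cmat_scale a Y"
  by (simp add: vec_eq_iff cmat_scale_def algebra_simps)
lemma cs_diff_coeff: "cmat_scale (a - b) X = cmat_scale a X - cmat_scale b X"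
  by (simp add: vec_eq_iff cmat_scale_def algebra_simps)
lemma cs_one: "cmat_scale 1 X = X"
  by (simp add: vec_eq_iff cmat_scale_def)
lemma cs_zero: "cmat_scale 0 X = 0"
  by (simp add: vec_eq_iff cmat_scale_def)

lemma matrix_inv_props:
  assumes "invertible (M::'a::semiring_1^'n^'m)"
  shows "M ** matrix_inv M = mat 1" "matrix_inv M ** M = mat 1"
  using someI_ex[OF assms[unfolded invertible_def]] unfolding matrix_inv_def by auto

lemma matrix_inv_unique:
  assumes "(M::'a::semiring_1^'n^'n) ** X = mat 1" "X ** M = mat 1"
  shows "matrix_inv M = X"
proof -
  have inv: "invertible M" using assms unfolding invertible_def by blast
  have "X = X ** (M ** matrix_inv M)" using matrix_inv_props(1)[OF inv] by simp
  also have "\<dots> = matrix_inv M" by (simp add: matrix_mul_assoc assms)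
  finally show ?thesis by simp
qed

lemma resolv_0: "resolv 0 A = mat 1"
  unfolding resolv_def cs_zero by (rule matrix_inv_unique) simp_all

lemma resolvent_identity:
  fixes A :: "complex^'N^'N"
  assumes iz: "invertible (mat 1 - cmat_scale z A)" and iw: "invertible (mat 1 - cmat_scale w A)"
  shows "cmat_scale (z - w) (resolv z A ** resolv w A) = cmat_scale z (resolv z A) - cmat_scale w (resolv w A)"
proof -
  define E where "E = mat 1 - cmat_scale z A"
  define F where "F = mat 1 - cmat_scale w A"
  have RE: "resolv z A ** E = mat 1" using matrix_inv_props(2)[OF iz] by (simp add: resolv_def E_def)
  have FR: "F ** resolv w A = mat 1" using matrix_inv_props(1)[OF iw] by (simp add: resolv_def F_def)
  have key: "cmat_scale (z - w) (mat 1) = cmat_scale z F - cmat_scale w E"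
    by (simp add: vec_eq_iff cmat_scale_def E_def F_def mat_def algebra_simps)
  have "cmat_scale (z - w) (resolv z A ** resolv w A) = resolv z A ** cmat_scale (z - w) (mat 1) ** resolv w A"
    by (simp add: cs_mult_left cs_mult_right)
  also have "\<dots> = cmat_scale z (resolv z A ** (F ** resolv w A)) - cmat_scale w ((resolv z A ** E) ** resolv w A)"
    unfolding key by (simp add: mm_diff_left mm_diff_right cs_mult_left cs_mult_right matrix_mul_assoc)
  also have "\<dots> = cmat_scale z (resolv z A) - cmat_scale w (resolv w A)"
    by (simp add: RE FR)
  finally show ?thesis .
qed



definition stepc :: "(complex \<Rightarrow> complex) \<Rightarrow> complex set \<Rightarrow> complex \<Rightarrow> complex \<Rightarrow> complex" where
  "stepc \<alpha> Z w u = (if u = w then (\<Sum>v\<in>Z. \<alpha> v * w / (w - v)) else \<alpha> u * u / (u - w))"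

lemma comb_step:
  fixes A :: "complex^'N^'N"
  assumes fin: "finite Z" and wZ: "w \<notin> Z"
    and inv: "\<And>u. u \<in> insert w Z \<Longrightarrow> invertible (mat 1 - cmat_scale u A)"
  shows "(\<Sum>u\<in>Z. cmat_scale (\<alpha> u) (resolv u A)) ** resolv w A
       = (\<Sum>u\<in>insert w Z. cmat_scale (stepc \<alpha> Z w u) (resolv u A))"
proof -
  have each: "cmat_scale (\<alpha> u) (resolv u A) ** resolv w A
      = cmat_scale (\<alpha> u * u / (u - w)) (resolv u A) - cmat_scale (\<alpha> u * w / (u - w)) (resolv w A)"
    if u: "u \<in> Z" for u
  proof -
    have uw: "u - w \<noteq> 0" using u wZ by auto
    have "resolv u A ** resolv w A = cmat_scale (1/(u - w)) (cmat_scale (u - w) (resolv u A ** resolv w A))"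
      using uw by (simp add: cs_cs cs_one)
    also have "\<dots> = cmat_scale (1/(u - w)) (cmat_scale u (resolv u A) - cmat_scale w (resolv w A))"
      using resolvent_identity[OF inv inv] u by simp
    finally have "resolv u A ** resolv w A = cmat_scale (u/(u - w)) (resolv u A) - cmat_scale (w/(u - w)) (resolv w A)"
      by (simp add: cs_diff cs_cs)
    then show ?thesis by (simp add: cs_mult_left cs_diff cs_cs)
  qed
  have "(\<Sum>u\<in>Z. cmat_scale (\<alpha> u) (resolv u A)) ** resolv w A
     = (\<Sum>u\<in>Z. cmat_scale (\<alpha> u * u / (u - w)) (resolv u A)) - (\<Sum>u\<in>Z. cmat_scale (\<alpha> u * w / (u - w)) (resolv w A))"
    by (simp add: mm_sum_left[OF fin] each sum_subtractf)
  also have "(\<Sum>u\<in>Z. cmat_scale (\<alpha> u * w / (u - w)) (resolv w A)) = cmat_scale (\<Sum>u\<in>Z. \<alpha> u * w / (u - w)) (resolv w A)"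
    by (simp add: cs_sum_coeff[OF fin])
  also have "(\<Sum>u\<in>Z. cmat_scale (\<alpha> u * u / (u - w)) (resolv u A)) = (\<Sum>u\<in>Z. cmat_scale (stepc \<alpha> Z w u) (resolv u A))"
    by (rule sum.cong) (use wZ in \<open>auto simp: stepc_def\<close>)
  also have "(\<Sum>u\<in>Z. \<alpha> u * w / (u - w)) = - stepc \<alpha> Z w w"
    by (simp add: stepc_def sum_negf[symmetric] minus_divide_right)
  finally show ?thesis using fin wZ
    by (simp add: vec_eq_iff cmat_scale_def)
qed



lemma wq_norm:
  assumes "0 \<le> q" "q < 1"
  shows "norm (z * complex_of_real ((1 - q) * q ^ j)) \<le> norm z"
proof -
  have "q ^ j \<le> 1" using assms by (simp add: power_le_one)
  then have "0 \<le> (1 - q) * q ^ j" "(1 - q) * q ^ j \<le> 1" using assms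
    by (auto intro: mult_le_one)
  moreover have "norm (z * complex_of_real ((1 - q) * q ^ j)) = norm z * abs ((1 - q) * q ^ j)"
    unfolding norm_mult norm_of_real ..
  ultimately show ?thesis by (simp add: mult_left_le)
qed

lemma wq_distinct:
  assumes "0 \<le> q" "q < 1" "j < M" "z * complex_of_real ((1 - q) * q ^ M) \<noteq> 0"
  shows "z * complex_of_real ((1 - q) * q ^ j) \<noteq> z * complex_of_real ((1 - q) * q ^ M)"
proof
  assume eq: "z * complex_of_real ((1 - q) * q ^ j) = z * complex_of_real ((1 - q) * q ^ M)"
  have z: "z \<noteq> 0" and qM: "q ^ M \<noteq> 0" using assms(4) by auto
  have "q \<noteq> 0" using qM assms(3) by (cases M) auto
  then have "q ^ M < q ^ j" using assms by (intro power_strict_decreasing) auto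
  moreover have "(1 - q) * q ^ j = (1 - q) * q ^ M" using eq z
    by (metis mult_left_cancel of_real_eq_iff)
  ultimately show False using assms(2) by simp
qed

lemma qpartial_comb:
  fixes A :: "complex^'N^'N" and A' :: "complex^'M^'M"
  assumes q: "0 \<le> q" "q < 1"
    and inv: "\<And>u. norm u \<le> norm z \<Longrightarrow> invertible (mat 1 - cmat_scale u A) \<and> invertible (mat 1 - cmat_scale u A')"
  shows "\<exists>Z \<alpha>. finite Z \<and> (\<forall>u\<in>Z. norm u \<le> norm z) \<and>
     Z \<subseteq> insert 0 ((\<lambda>j. z * complex_of_real ((1 - q) * q ^ j)) ` {..<M}) \<and>
     qpartial q A z M = (\<Sum>u\<in>Z. cmat_scale (\<alpha> u) (resolv u A)) \<and>
     qpartial q A' z M = (\<Sum>u\<in>Z. cmat_scale (\<alpha> u) (resolv u A'))"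
proof (induction M)
  case 0
  show ?case
    by (rule exI[of _ "{0}"], rule exI[of _ "\<lambda>_. 1"]) (simp add: resolv_0 cs_one)
next
  case (Suc M)
  define w where "w = z * complex_of_real ((1 - q) * q ^ M)"
  from Suc obtain Z \<alpha> where fin: "finite Z" and nZ: "\<forall>u\<in>Z. norm u \<le> norm z"
    and sub: "Z \<subseteq> insert 0 ((\<lambda>j. z * complex_of_real ((1 - q) * q ^ j)) ` {..<M})"
    and P: "qpartial q A z M = (\<Sum>u\<in>Z. cmat_scale (\<alpha> u) (resolv u A))"
    and P': "qpartial q A' z M = (\<Sum>u\<in>Z. cmat_scale (\<alpha> u) (resolv u A'))" by blast
  have sub2: "insert 0 ((\<lambda>j. z * complex_of_real ((1 - q) * q ^ j)) ` {..<M})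
     \<subseteq> insert 0 ((\<lambda>j. z * complex_of_real ((1 - q) * q ^ j)) ` {..<Suc M})" by auto
  have QS: "qpartial q A z (Suc M) = qpartial q A z M ** resolv w A"
      "qpartial q A' z (Suc M) = qpartial q A' z M ** resolv w A'"
    by (simp only: qpartial.simps w_def)+
  show ?case
  proof (cases "w = 0")
    case True
    show ?thesis
      unfolding QS True resolv_0 matrix_mul_rid using fin nZ subset_trans[OF sub sub2] P P'
      by (intro exI[of _ Z] exI[of _ \<alpha>] conjI) assumption+
  next
    case False
    have wZ: "w \<notin> Z"
    proof
      assume "w \<in> Z"
      with sub False obtain j where "j < M" "w = z * complex_of_real ((1 - q) * q ^ j)" by auto
      with wq_distinct[OF q this(1)] False show False by (auto simp: w_def)
    qed
    have nw: "norm w \<le> norm z" unfolding w_def by (rule wq_norm[OF q])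
    have invs: "\<And>u. u \<in> insert w Z \<Longrightarrow> invertible (mat 1 - cmat_scale u A)"
               "\<And>u. u \<in> insert w Z \<Longrightarrow> invertible (mat 1 - cmat_scale u A')"
      using inv nZ nw by auto
    have g3: "insert w Z \<subseteq> insert 0 ((\<lambda>j. z * complex_of_real ((1 - q) * q ^ j)) ` {..<Suc M})"
    proof -
      have "w \<in> (\<lambda>j. z * complex_of_real ((1 - q) * q ^ j)) ` {..<Suc M}"
        unfolding w_def by (rule imageI) simp
      then show ?thesis using subset_trans[OF sub sub2] by (simp only: insert_subset) blast
    qed
    show ?thesis
      unfolding QS P P'
      apply (intro exI[of _ "insert w Z"] exI[of _ "stepc \<alpha> Z w"] conjI)
          apply (simp add: fin)
         apply (simp add: nZ nw)
        apply (rule g3)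
       apply (rule comb_step[OF fin wZ], erule invs(1))
      apply (rule comb_step[OF fin wZ], erule invs(2))
      done
  qed
qed



lemma vec_norm_le_sum: "norm (x::'a::real_normed_vector^'n) \<le> (\<Sum>i\<in>UNIV. norm (x$i))"
  by (simp add: norm_vec_def L2_set_le_sum)

lemma entry_le: "norm (X$i$j) \<le> norm (X::'a::real_normed_vector^'b^'c)"
  by (rule order_trans[OF Finite_Cartesian_Product.norm_nth_le Finite_Cartesian_Product.norm_nth_le])

lemma mm_norm:
  fixes X :: "complex^'b^'a" and Y :: "complex^'c^'b"
  shows "norm (X ** Y) \<le> real (CARD('a)*CARD('b)*CARD('c)) * (norm X * norm Y)"
proof -
  have e: "norm ((X ** Y)$i$j) \<le> real CARD('b) * (norm X * norm Y)" for i j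
  proof -
    have "norm ((X ** Y)$i$j) = norm (\<Sum>k\<in>UNIV. X$i$k * Y$k$j)"
      by (simp add: matrix_matrix_mult_def)
    also have "\<dots> \<le> (\<Sum>k\<in>UNIV. norm (X$i$k) * norm (Y$k$j))"
      by (rule order_trans[OF norm_sum]) (simp add: norm_mult)
    also have "\<dots> \<le> (\<Sum>k\<in>(UNIV::'b set). norm X * norm Y)"
      by (rule sum_mono, rule mult_mono) (auto simp: entry_le)
    finally show ?thesis by simp
  qed
  have "norm (X ** Y) \<le> (\<Sum>i\<in>UNIV. norm ((X ** Y)$i))" by (rule vec_norm_le_sum)
  also have "\<dots> \<le> (\<Sum>i\<in>(UNIV::'a set). \<Sum>j\<in>(UNIV::'c set). norm ((X ** Y)$i$j))"
    by (rule sum_mono, rule vec_norm_le_sum)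
  also have "\<dots> \<le> (\<Sum>i\<in>(UNIV::'a set). \<Sum>j\<in>(UNIV::'c set). real CARD('b) * (norm X * norm Y))"
    by (intro sum_mono e)
  also have "\<dots> = real (CARD('a)*CARD('b)*CARD('c)) * (norm X * norm Y)"
    by simp
  finally show ?thesis .
qed

lemma mv_norm:
  fixes X :: "complex^'b^'a" and x :: "complex^'b"
  shows "norm (X *v x) \<le> real (CARD('a)*CARD('b)) * (norm X * norm x)"
proof -
  have e: "norm ((X *v x)$i) \<le> real CARD('b) * (norm X * norm x)" for i
  proof -
    have "norm ((X *v x)$i) = norm (\<Sum>k\<in>UNIV. X$i$k * x$k)"
      by (simp add: matrix_vector_mult_def)
    also have "\<dots> \<le> (\<Sum>k\<in>UNIV. norm (X$i$k) * norm (x$k))"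
      by (rule order_trans[OF norm_sum]) (simp add: norm_mult)
    also have "\<dots> \<le> (\<Sum>k\<in>(UNIV::'b set). norm X * norm x)"
      by (rule sum_mono, rule mult_mono) (auto simp: entry_le Finite_Cartesian_Product.norm_nth_le)
    finally show ?thesis by simp
  qed
  have "norm (X *v x) \<le> (\<Sum>i\<in>UNIV. norm ((X *v x)$i))" by (rule vec_norm_le_sum)
  also have "\<dots> \<le> (\<Sum>i\<in>(UNIV::'a set). real CARD('b) * (norm X * norm x))"
    by (intro sum_mono e)
  also have "\<dots> = real (CARD('a)*CARD('b)) * (norm X * norm x)"
    by simp
  finally show ?thesis .
qed

lemma norm_vscale: "norm (\<chi> j. w * (v::complex^'n) $ j) = norm w * norm v"
  unfolding norm_vec_def by (simp add: norm_mult L2_set_right_distrib)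

lemma norm_cs: "norm (cmat_scale w (X::complex^'b^'a)) = norm w * norm X"
proof -
  have "cmat_scale w X $ i = (\<chi> j. w * (X $ i) $ j)" for i by (simp add: cmat_scale_def)
  then show ?thesis
    unfolding norm_vec_def[of "cmat_scale w X"] by (simp add: norm_vscale L2_set_right_distrib norm_vec_def norm_mult)
qed

lemma tendsto_mm:
  fixes f :: "nat \<Rightarrow> complex^'b^'a" and C :: "complex^'a^'c" and B :: "complex^'d^'b"
  assumes "f \<longlonglongrightarrow> L"
  shows "(\<lambda>n. C ** f n ** B) \<longlonglongrightarrow> C ** L ** B"
proof (intro vec_tendstoI)
  fix i j
  have t: "\<And>k l. (\<lambda>n. f n $ k $ l) \<longlonglongrightarrow> L $ k $ l"
    by (intro tendsto_vec_nth assms)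
  show "(\<lambda>n. (C ** f n ** B) $ i $ j) \<longlonglongrightarrow> (C ** L ** B) $ i $ j"
    unfolding matrix_matrix_mult_def by (simp, intro tendsto_intros t)
qed



lemma small_resolv:
  fixes A :: "complex^'N^'N"
  shows "\<exists>\<delta>>0. \<exists>L\<ge>0. \<forall>w. norm w < \<delta> \<longrightarrow>
     invertible (mat 1 - cmat_scale w A) \<and> norm (resolv w A - mat 1) \<le> L * norm w"
proof -
  define K where "K = real (CARD('N)*CARD('N)*CARD('N))"
  define Kv where "Kv = real (CARD('N)*CARD('N))"
  define a where "a = norm A + 1"
  define n1 where "n1 = norm (mat 1 :: complex^'N^'N)"
  have c1: "1 \<le> CARD('N)" by (simp add: Suc_le_eq)
  have "(1::nat) \<le> CARD('N)*CARD('N)*CARD('N)" using c1 by (metis mult_le_mono nat_mult_1)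
  then have K1: "K \<ge> 1" unfolding K_def using of_nat_le_iff[THEN iffD2] by (metis of_nat_1)
  have KvK: "Kv \<le> K" unfolding K_def Kv_def
    using c1 by (metis of_nat_le_iff mult_le_mono nat_mult_1_right le_refl)
  have Kv0: "Kv \<ge> 0" unfolding Kv_def by simp
  have a0: "a > 0" "norm A \<le> a" unfolding a_def by (smt (verit) norm_ge_zero)+
  define \<delta> where "\<delta> = 1 / (2 * K * a)"
  have \<delta>0: "\<delta> > 0" unfolding \<delta>_def using K1 a0 by simp
  define L where "L = 2 * K * n1 * norm A"
  have L0: "L \<ge> 0" unfolding L_def n1_def using K1 by simp
  have main: "invertible (mat 1 - cmat_scale w A) \<and> norm (resolv w A - mat 1) \<le> L * norm w"
    if w: "norm w < \<delta>" for w
  proof -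
    have small: "K * (norm w * norm A) \<le> 1/2"
    proof -
      have "K * (norm w * norm A) \<le> K * (norm w * a)"
        using K1 a0 by (intro mult_left_mono mult_left_mono) auto
      also have "\<dots> \<le> K * (\<delta> * a)"
        using K1 a0 w by (intro mult_left_mono mult_right_mono) auto
      also have "\<dots> = 1/2" unfolding \<delta>_def using K1 a0 by simp
      finally show ?thesis .
    qed
    have smallv: "Kv * (norm w * norm A) \<le> 1/2"
      using small KvK by (meson mult_right_mono norm_ge_zero order_trans zero_le_mult_iff)
    define M where "M = mat 1 - cmat_scale w A"
    have ker: "\<forall>x. M *v x = 0 \<longrightarrow> x = 0"
    proof (intro allI impI)
      fix x assume "M *v x = 0"
      then have "x = cmat_scale w A *v x"
        unfolding M_def by (simp add: matrix_vector_mult_diff_rdistrib)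
      then have "norm x \<le> Kv * (norm (cmat_scale w A) * norm x)"
        using mv_norm[of "cmat_scale w A" x] unfolding Kv_def by simp
      also have "\<dots> = (Kv * (norm w * norm A)) * norm x" by (simp add: norm_cs)
      also have "\<dots> \<le> (1/2) * norm x" using smallv by (intro mult_right_mono) auto
      finally show "x = 0" by simp
    qed
    have invM: "invertible M"
      using ker unfolding invertible_left_inverse matrix_left_invertible_ker(1) .
    have RM: "resolv w A ** M = mat 1"
      using matrix_inv_props(2)[OF invM] by (simp add: resolv_def M_def)
    then have eq: "resolv w A - mat 1 = resolv w A ** cmat_scale w A"
      unfolding M_def mm_diff_right by (simp add: algebra_simps)
    have b1: "norm (resolv w A - mat 1) \<le> K * (norm (resolv w A) * (norm w * norm A))"
      unfolding eq using mm_norm[of "resolv w A" "cmat_scale w A"] by (simp add: K_def norm_cs)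
    also have "\<dots> = (K * (norm w * norm A)) * norm (resolv w A)" by simp
    finally have b2: "norm (resolv w A - mat 1) \<le> (K * (norm w * norm A)) * norm (resolv w A)" .
    have "norm (resolv w A) \<le> n1 + norm (resolv w A - mat 1)"
      unfolding n1_def by (metis norm_triangle_sub add.commute)
    also have "\<dots> \<le> n1 + (1/2) * norm (resolv w A)"
      using b2 small by (smt (verit) mult_right_mono norm_ge_zero)
    finally have nR: "norm (resolv w A) \<le> 2 * n1" by simp
    have "norm (resolv w A - mat 1) \<le> K * (norm (resolv w A) * (norm w * norm A))" by (rule b1)
    also have "\<dots> \<le> K * ((2 * n1) * (norm w * norm A))"
      using K1 nR by (intro mult_left_mono mult_right_mono) auto
    also have "\<dots> = L * norm w" unfolding L_def by simp
    finally show ?thesis using invM M_def by simp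
  qed
  show ?thesis using \<delta>0 L0 main by blast
qed



lemma convergent_telescope:
  fixes f :: "nat \<Rightarrow> 'a::banach"
  assumes "summable (\<lambda>n. norm (f (Suc n) - f n))"
  shows "convergent f"
proof -
  have s: "summable (\<lambda>n. f (Suc n) - f n)" by (rule summable_norm_cancel[OF assms])
  have "(\<lambda>m. f 0 + (\<Sum>n<m. f (Suc n) - f n)) \<longlonglongrightarrow> f 0 + (\<Sum>n. f (Suc n) - f n)"
    by (intro tendsto_add tendsto_const summable_LIMSEQ s)
  moreover have "(\<lambda>m. f 0 + (\<Sum>n<m. f (Suc n) - f n)) = f"
    by (simp add: sum_lessThan_telescope)
  ultimately show ?thesis unfolding convergent_def by auto
qed

lemma qpartial_convergent:
  fixes A :: "complex^'N^'N"
  assumes q: "0 \<le> q" "q < 1" and L0: "L \<ge> 0"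
    and H: "\<And>w. norm w < \<delta> \<Longrightarrow> norm (resolv w A - mat 1) \<le> L * norm w"
    and z: "norm z < \<delta>"
  shows "convergent (qpartial q A z)"
proof -
  define K where "K = real (CARD('N)*CARD('N)*CARD('N))"
  define n1 where "n1 = norm (mat 1 :: complex^'N^'N)"
  define c where "c = K * L * norm z"
  define P where "P = qpartial q A z"
  define R where "R = (\<lambda>M. resolv (z * complex_of_real ((1 - q) * q ^ M)) A)"
  have K0: "K \<ge> 0" unfolding K_def by simp
  have c0: "c \<ge> 0" unfolding c_def using K0 L0 by simp
  have PS: "P (Suc M) = P M ** R M" for M unfolding P_def R_def by simp
  have dM: "0 \<le> (1 - q) * q ^ M" for M using q by simp
  have nw: "norm (z * complex_of_real ((1 - q) * q ^ M)) = norm z * ((1 - q) * q ^ M)" for M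
    using dM[of M] unfolding norm_mult norm_of_real by simp
  have diff: "norm (P (Suc M) - P M) \<le> c * ((1 - q) * q ^ M) * norm (P M)" for M
  proof -
    have "P (Suc M) - P M = P M ** (R M - mat 1)" unfolding PS mm_diff_right by simp
    then have "norm (P (Suc M) - P M) \<le> K * (norm (P M) * norm (R M - mat 1))"
      using mm_norm[of "P M" "R M - mat 1"] unfolding K_def by simp
    also have "\<dots> \<le> K * (norm (P M) * (L * (norm z * ((1 - q) * q ^ M))))"
    proof -
      have "norm (R M - mat 1) \<le> L * (norm z * ((1 - q) * q ^ M))"
        unfolding R_def using H[of "z * complex_of_real ((1 - q) * q ^ M)"] wq_norm[OF q, of z M] z nw[of M]
        by simp
      then show ?thesis using K0 by (intro mult_left_mono) auto
    qed
    also have "\<dots> = c * ((1 - q) * q ^ M) * norm (P M)" unfolding c_def by (simp add: algebra_simps)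
    finally show ?thesis .
  qed
  have bound: "norm (P M) \<le> n1 * exp (c * (1 - q ^ M))" for M
  proof (induction M)
    case 0 show ?case unfolding P_def n1_def by simp
  next
    case (Suc M)
    have "norm (P (Suc M)) \<le> norm (P M) + norm (P (Suc M) - P M)"
      by (metis norm_triangle_sub add.commute)
    also have "\<dots> \<le> norm (P M) * (1 + c * ((1 - q) * q ^ M))"
      using diff[of M] by (simp add: algebra_simps)
    also have "\<dots> \<le> n1 * exp (c * (1 - q ^ M)) * exp (c * ((1 - q) * q ^ M))"
      using Suc.IH c0 dM[of M] by (intro mult_mono) (auto intro: add_nonneg_nonneg simp: n1_def)
    also have "\<dots> = n1 * exp (c * (1 - q ^ Suc M))"
      by (simp add: mult.assoc exp_add[symmetric] algebra_simps)
    finally show ?case .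
  qed
  have bound2: "norm (P M) \<le> n1 * exp c" for M
  proof -
    have "c * (1 - q ^ M) \<le> c" using c0 q by (simp add: mult_left_le zero_le_power)
    then have "exp (c * (1 - q ^ M)) \<le> exp c" by simp
    then show ?thesis using bound[of M] unfolding n1_def
      by (meson mult_left_mono norm_ge_zero order_trans)
  qed
  have dd: "norm (norm (P (Suc M) - P M)) \<le> (c * (1 - q) * (n1 * exp c)) * q ^ M" for M
  proof -
    have "norm (P (Suc M) - P M) \<le> c * ((1 - q) * q ^ M) * (n1 * exp c)"
      using diff[of M] bound2[of M] c0 dM[of M]
      by (meson mult_left_mono order_trans zero_le_mult_iff)
    then show ?thesis by (simp add: algebra_simps)
  qed
  have "summable (\<lambda>M. (c * (1 - q) * (n1 * exp c)) * q ^ M)"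
    using q by (intro summable_mult summable_geometric) simp
  then have "summable (\<lambda>M. norm (P (Suc M) - P M))"
    by (rule summable_comparison_test'[where N=0]) (use dd in auto)
  then show ?thesis unfolding P_def by (rule convergent_telescope)
qed



lemma sandwich_sum:
  fixes C :: "complex^'N^'n" and B :: "complex^'m^'N"
  assumes "finite Z"
  shows "C ** (\<Sum>u\<in>Z. cmat_scale (\<alpha> u) (X u)) ** B = (\<Sum>u\<in>Z. cmat_scale (\<alpha> u) (C ** X u ** B))"
  by (simp add: mm_sum_right[OF assms] mm_sum_left[OF assms] cs_mult_left cs_mult_right)

theorem proposition7p1:
  fixes q :: real
    and C :: "complex^'N^'n" and A :: "complex^'N^'N" and B :: "complex^'m^'N"
    and C' :: "complex^'M^'n" and A' :: "complex^'M^'M" and B' :: "complex^'m^'M"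
  assumes "0 \<le> q" and "q < 1"
    and "\<exists>e>0. \<forall>z. norm z < e \<longrightarrow>
           C ** resolv z A ** B = C' ** resolv z A' ** B'"
  shows "\<exists>e>0. \<forall>z. norm z < e \<longrightarrow>
           convergent (qpartial q A z) \<and> convergent (qpartial q A' z) \<and>
           C ** qinfprod q A z ** B = C' ** qinfprod q A' z ** B'"
proof -
  note q = assms(1,2)
  obtain e where e0: "e > 0" and he: "\<And>z. norm z < e \<Longrightarrow> C ** resolv z A ** B = C' ** resolv z A' ** B'"
    using assms(3) by (elim exE conjE) simp
  obtain \<delta> L where d0: "\<delta> > 0" and L0: "L \<ge> 0" and hA0: "\<forall>w. norm w < \<delta> \<longrightarrow>
     invertible (mat 1 - cmat_scale w A) \<and> norm (resolv w A - mat 1) \<le> L * norm w"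
    using small_resolv[of A] by (elim exE conjE) 
  obtain \<delta>' L' where d0': "\<delta>' > 0" and L0': "L' \<ge> 0" and hA0': "\<forall>w. norm w < \<delta>' \<longrightarrow>
     invertible (mat 1 - cmat_scale w A') \<and> norm (resolv w A' - mat 1) \<le> L' * norm w"
    using small_resolv[of A'] by (elim exE conjE)
  have hA: "\<And>w. norm w < \<delta> \<Longrightarrow> invertible (mat 1 - cmat_scale w A) \<and> norm (resolv w A - mat 1) \<le> L * norm w"
    using hA0 by simp
  have hA': "\<And>w. norm w < \<delta>' \<Longrightarrow> invertible (mat 1 - cmat_scale w A') \<and> norm (resolv w A' - mat 1) \<le> L' * norm w"
    using hA0' by simp
  define e0 where "e0 = min e (min \<delta> \<delta>')"
  have "e0 > 0" unfolding e0_def using e0 d0 d0' by simp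
  moreover have "convergent (qpartial q A z) \<and> convergent (qpartial q A' z) \<and>
           C ** qinfprod q A z ** B = C' ** qinfprod q A' z ** B'" if z: "norm z < e0" for z
  proof -
    have zz: "norm z < e" "norm z < \<delta>" "norm z < \<delta>'" using z unfolding e0_def by auto
    have c1: "convergent (qpartial q A z)"
      by (rule qpartial_convergent[OF q L0, of \<delta>, OF conjunct2[OF hA] zz(2)])
    have c2: "convergent (qpartial q A' z)"
      by (rule qpartial_convergent[OF q L0', of \<delta>', OF conjunct2[OF hA'] zz(3)])
    have invz: "invertible (mat 1 - cmat_scale u A) \<and> invertible (mat 1 - cmat_scale u A')"
      if "norm u \<le> norm z" for u
    proof -
      have "norm u < \<delta>" "norm u < \<delta>'" using that zz by linarith+
      then show ?thesis using conjunct1[OF hA] conjunct1[OF hA'] by blast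
    qed
    have triv: "\<And>u::complex. norm u \<le> norm z \<Longrightarrow> norm u \<le> norm z" by simp
    have eqM: "C ** qpartial q A z M ** B = C' ** qpartial q A' z M ** B'" for M
    proof -
      obtain Z \<alpha> where fin: "finite Z" and nZ: "\<forall>u\<in>Z. norm u \<le> norm z"
        and P: "qpartial q A z M = (\<Sum>u\<in>Z. cmat_scale (\<alpha> u) (resolv u A))"
        and P': "qpartial q A' z M = (\<Sum>u\<in>Z. cmat_scale (\<alpha> u) (resolv u A'))"
        and sub: "Z \<subseteq> insert 0 ((\<lambda>j. z * complex_of_real ((1 - q) * q ^ j)) ` {..<M})"
      proof -
        have "\<exists>Z \<alpha>. finite Z \<and> (\<forall>u\<in>Z. norm u \<le> norm z) \<and>
           Z \<subseteq> insert 0 ((\<lambda>j. z * complex_of_real ((1 - q) * q ^ j)) ` {..<M}) \<and>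
           qpartial q A z M = (\<Sum>u\<in>Z. cmat_scale (\<alpha> u) (resolv u A)) \<and>
           qpartial q A' z M = (\<Sum>u\<in>Z. cmat_scale (\<alpha> u) (resolv u A'))"
          apply (rule qpartial_comb[where z=z and M=M and A=A and A'=A' and q=q])
            apply (rule q(1))
           apply (rule q(2))
          apply (erule invz)
          done
        then show ?thesis using that by blast
      qed
      show ?thesis unfolding P P' sandwich_sum[OF fin]
      proof (rule sum.cong)
        fix u assume "u \<in> Z"
        then have "norm u \<le> norm z" using nZ by blast
        then have "norm u < e" using zz by linarith
        then show "cmat_scale (\<alpha> u) (C ** resolv u A ** B) = cmat_scale (\<alpha> u) (C' ** resolv u A' ** B')"
          using he by simp
      qed simp
    qed
    have t1: "(\<lambda>M. C ** qpartial q A z M ** B) \<longlonglongrightarrow> C ** qinfprod q A z ** B"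
      unfolding qinfprod_def by (rule tendsto_mm) (use c1 in \<open>simp add: convergent_LIMSEQ_iff\<close>)
    have t2: "(\<lambda>M. C' ** qpartial q A' z M ** B') \<longlonglongrightarrow> C' ** qinfprod q A' z ** B'"
      unfolding qinfprod_def by (rule tendsto_mm) (use c2 in \<open>simp add: convergent_LIMSEQ_iff\<close>)
    have "C ** qinfprod q A z ** B = C' ** qinfprod q A' z ** B'"
      using t1 t2 unfolding eqM by (rule LIMSEQ_unique)
    then show ?thesis using c1 c2 by simp
  qed
  ultimately show ?thesis by (intro exI[of _ e0]) simp
qed


end
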